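(* Assume $F$ is $K$-smooth with $\ell\in\mathrm{int}(K)$, let $e\in\mathrm{int}(K)$ and $\gamma\in(0,1)$. In Algorithm 6 (with arbitrary choices $e_k\in\mathrm{int}(K)$), every stepsize satisfies $$t_k\ge\min\Big\{\min_{c^*\in C_e}\frac{\gamma\langle c^*,e_k\rangle}{\langle c^*,\ell\rangle},\,1\Big\}.$$
   Context: $K\subset\mathbb{R}^m$ closed convex pointed cone with nonempty interior; $y\preceq_K y'$ iff $y'-y\in K$. $K^*=\{c:\langle c,y\rangle\ge0\ \forall y\in K\}$; $C_e:=\{c^*\in K^*:\langle c^*,e\rangle=1\}$. $F:\mathbb{R}^n\to\mathbb{R}^m$ differentiable with Jacobian $JF$; $K$-smooth with $\ell$: $F(y)-F(x)\preceq_K JF(x)(y-x)+\tfrac12\|y-x\|^2\ell$ $\forall x,y$. Algorithm 6 (generic first-order method): given $x^0$, $\gamma\in(0,1)$, for $k=0,1,\dots$: choose $e_k\in\mathrm{int}(K)$; $d^k:=\arg\min_d\max_{c^*\in C_e}\langle c^*,JF(x^k)d+\tfrac12\|d\|^2e_k\rangle$; if $d^k=0$ stop; otherwise $t_k:=\max\{\gamma^j:j\in\mathbb{N},\ F(x^k+\gamma^jd^k)-F(x^k)\preceq_K\gamma^j(JF(x^k)d^k+\tfrac12\|d^k\|^2e_k)\}$, $x^{k+1}:=x^k+t_kd^k$. *)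

theory Defs
  imports "HOL-Analysis.Analysis"
begin

definition Kle :: "(real^'m) set \<Rightarrow> real^'m \<Rightarrow> real^'m \<Rightarrow> bool" where
  "Kle K y y' \<longleftrightarrow> y' - y \<in> K"

definition dual_cone :: "(real^'m) set \<Rightarrow> (real^'m) set" where
  "dual_cone K = {c. \<forall>y\<in>K. 0 \<le> c \<bullet> y}"

definition Ce :: "(real^'m) set \<Rightarrow> real^'m \<Rightarrow> (real^'m) set" where
  "Ce K e = {c \<in> dual_cone K. c \<bullet> e = 1}"

definition proper_cone :: "(real^'m) set \<Rightarrow> bool" where
  "proper_cone K \<longleftrightarrow> closed K \<and> convex K \<and> cone K \<and>
     (\<forall>y. y \<in> K \<and> - y \<in> K \<longrightarrow> y = 0) \<and> interior K \<noteq> {}"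

definition K_smooth :: "(real^'m) set \<Rightarrow> (real^'n \<Rightarrow> real^'m) \<Rightarrow> (real^'n \<Rightarrow> real^'n^'m)
    \<Rightarrow> real^'m \<Rightarrow> bool" where
  "K_smooth K F JF l \<longleftrightarrow> (\<forall>x y. Kle K (F y - F x)
      (JF x *v (y - x) + ((1/2) * (norm (y - x))^2) *\<^sub>R l))"

definition subprob :: "(real^'m) set \<Rightarrow> real^'m \<Rightarrow> real^'n^'m \<Rightarrow> real^'m \<Rightarrow> real^'n \<Rightarrow> real" where
  "subprob K e J ek d = (SUP c\<in>Ce K e. c \<bullet> (J *v d + ((1/2) * (norm d)^2) *\<^sub>R ek))"

definition armijo_ok :: "(real^'m) set \<Rightarrow> (real^'n \<Rightarrow> real^'m) \<Rightarrow> real^'n^'m \<Rightarrow> real^'m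
    \<Rightarrow> real^'n \<Rightarrow> real^'n \<Rightarrow> real \<Rightarrow> bool" where
  "armijo_ok K F J ek x d s \<longleftrightarrow>
     Kle K (F (x + s *\<^sub>R d) - F x) (s *\<^sub>R (J *v d + ((1/2) * (norm d)^2) *\<^sub>R ek))"

definition armijo_step :: "real \<Rightarrow> (real^'m) set \<Rightarrow> (real^'n \<Rightarrow> real^'m) \<Rightarrow> real^'n^'m
    \<Rightarrow> real^'m \<Rightarrow> real^'n \<Rightarrow> real^'n \<Rightarrow> real" where
  "armijo_step \<gamma> K F J ek x d = Sup {\<gamma> ^ j | j::nat. armijo_ok K F J ek x d (\<gamma> ^ j)}"

end

theory Submission
  imports Defs
begin

lemma K_add: "proper_cone K \<Longrightarrow> a \<in> K \<Longrightarrow> b \<in> K \<Longrightarrow> a + b \<in> K"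
  unfolding proper_cone_def using convex_cone by blast

lemma K_scale: "proper_cone K \<Longrightarrow> a \<in> K \<Longrightarrow> 0 \<le> c \<Longrightarrow> c *\<^sub>R a \<in> K"
  unfolding proper_cone_def Convex.cone_def by blast

lemma K_sep:
  assumes K: "proper_cone K" and z: "z \<notin> K"
  shows "\<exists>c\<in>dual_cone K. c \<bullet> z < 0"
proof -
  from K have cK: "convex K" "closed K" and ne: "interior K \<noteq> {}"
    unfolding proper_cone_def by auto
  obtain a b where ab: "a \<bullet> z < b" "\<forall>x\<in>K. b < a \<bullet> x"
    using separating_hyperplane_closed_point[OF cK z] by blast
  from ne obtain p where "p \<in> K" using interior_subset by blast
  then have "0 \<in> K" using K_scale[OF K, of p 0] by simp
  with ab have b0: "b < 0" by force
  have "a \<in> dual_cone K"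
    unfolding dual_cone_def
  proof (clarify)
    fix y assume y: "y \<in> K"
    show "0 \<le> a \<bullet> y"
    proof (rule ccontr)
      assume "\<not> 0 \<le> a \<bullet> y"
      hence neg: "a \<bullet> y < 0" by simp
      define c where "c = b / (a \<bullet> y)"
      have c0: "0 \<le> c" unfolding c_def using neg b0 by (simp add: divide_nonpos_neg)
      have "c *\<^sub>R y \<in> K" using K_scale[OF K y c0] .
      hence "b < a \<bullet> (c *\<^sub>R y)" using ab by blast
      also have "a \<bullet> (c *\<^sub>R y) = b" unfolding c_def using neg by simp
      finally show False by simp
    qed
  qed
  with ab b0 show ?thesis by force
qed

lemma dual_pos:
  assumes c: "c \<in> dual_cone K" and c0: "c \<noteq> 0" and p: "p \<in> interior K"
  shows "0 < c \<bullet> p"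
proof -
  obtain \<epsilon> where e: "\<epsilon> > 0" "ball p \<epsilon> \<subseteq> K"
    using p by (meson mem_interior)
  define y where "y = p - (\<epsilon>/2 / norm c) *\<^sub>R c"
  have "dist p y < \<epsilon>" unfolding y_def dist_norm using e c0 by simp
  hence "y \<in> K" using e by auto
  hence "0 \<le> c \<bullet> y" using c unfolding dual_cone_def by auto
  also have "c \<bullet> y = c \<bullet> p - \<epsilon>/2 * norm c"
    unfolding y_def using c0 by (simp add: inner_diff_right power2_norm_eq_inner[symmetric] power2_eq_square)
  finally have "\<epsilon>/2 * norm c \<le> c \<bullet> p" by simp
  moreover have "0 < \<epsilon>/2 * norm c" using e c0 by simp
  ultimately show ?thesis by linarith
qed

lemma int_shift:
  fixes p l :: "real^'m"
  assumes p: "p \<in> interior K"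
  shows "\<exists>r>0. p - r *\<^sub>R l \<in> K"
proof -
  obtain \<epsilon> where e: "\<epsilon> > 0" "ball p \<epsilon> \<subseteq> K"
    using p by (meson mem_interior)
  define r where "r = \<epsilon> / (2 * (norm l + 1))"
  have nl: "0 < 2 * (norm l + 1)" by (intro mult_pos_pos add_nonneg_pos) auto
  hence r0: "r > 0" unfolding r_def using e by simp
  have "r * norm l \<le> r * (norm l + 1)" using r0 by simp
  also have "r * (norm l + 1) = \<epsilon> / 2" unfolding r_def using nl by (simp add: field_simps)
  also have "\<dots> < \<epsilon>" using e by simp
  finally have "norm (r *\<^sub>R l) < \<epsilon>" using r0 by simp
  hence "dist p (p - r *\<^sub>R l) < \<epsilon>" by (simp add: dist_norm)
  hence "p - r *\<^sub>R l \<in> ball p \<epsilon>" by simp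
  thus ?thesis using e r0 by blast
qed

lemma armijo_suff:
  assumes K: "proper_cone K" and smooth: "K_smooth K F JF l"
    and s: "0 < s" and es: "ek - s *\<^sub>R l \<in> K"
  shows "armijo_ok K F (JF x) ek x d s"
proof -
  have A: "(JF x *v (s *\<^sub>R d) + ((1/2) * (norm (s *\<^sub>R d))^2) *\<^sub>R l) - (F (x + s *\<^sub>R d) - F x) \<in> K"
    using smooth unfolding K_smooth_def Kle_def by (metis add_diff_cancel_left')
  have B: "(s/2 * (norm d)^2) *\<^sub>R (ek - s *\<^sub>R l) \<in> K"
    using K_scale[OF K es] s by simp
  have eq: "s *\<^sub>R (JF x *v d + ((1/2) * (norm d)^2) *\<^sub>R ek) - (F (x + s *\<^sub>R d) - F x)
     = ((JF x *v (s *\<^sub>R d) + ((1/2) * (norm (s *\<^sub>R d))^2) *\<^sub>R l) - (F (x + s *\<^sub>R d) - F x))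
       + (s/2 * (norm d)^2) *\<^sub>R (ek - s *\<^sub>R l)"
    using s by (simp add: matrix_vector_mult_scaleR algebra_simps power2_eq_square)
  show ?thesis unfolding armijo_ok_def Kle_def eq using K_add[OF K A B] .
qed

theorem mainTheorem12:
  fixes K :: "(real^'m) set"
    and F :: "real^'n \<Rightarrow> real^'m"
    and JF :: "real^'n \<Rightarrow> real^'n^'m"
    and l e :: "real^'m"
    and \<gamma> :: real
    and x :: "nat \<Rightarrow> real^'n"
    and ek :: "nat \<Rightarrow> real^'m"
    and d :: "nat \<Rightarrow> real^'n"
    and t :: "nat \<Rightarrow> real"
  assumes K: "proper_cone K"
    and deriv: "\<And>z. (F has_derivative (\<lambda>h. JF z *v h)) (at z)"
    and smooth: "K_smooth K F JF l"
    and l_int: "l \<in> interior K"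
    and e_int: "e \<in> interior K"
    and gamma: "0 < \<gamma>" "\<gamma> < 1"
    and ek_int: "\<And>k. ek k \<in> interior K"
    and d_def: "\<And>k. d k = (ARG_MIN (subprob K e (JF (x k)) (ek k)) dd. True)"
    and t_def: "\<And>k. t k = armijo_step \<gamma> K F (JF (x k)) (ek k) (x k) (d k)"
    and x_def: "\<And>k. x (Suc k) = x k + t k *\<^sub>R d k"
  shows "\<And>k. d k \<noteq> 0 \<Longrightarrow>
           min (INF c\<in>Ce K e. \<gamma> * (c \<bullet> ek k) / (c \<bullet> l)) 1 \<le> t k"
proof -
  fix k
  define m0 where "m0 = (INF c\<in>Ce K e. \<gamma> * (c \<bullet> ek k) / (c \<bullet> l))"
  define S where "S = {\<gamma> ^ j | j::nat. armijo_ok K F (JF (x k)) (ek k) (x k) (d k) (\<gamma> ^ j)}"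
  have tS: "t k = Sup S" unfolding t_def armijo_step_def S_def by simp
  have bdd: "bdd_above S" unfolding S_def using gamma
    by (intro bdd_aboveI[of _ 1]) (auto intro: power_le_one)
  have Ce_pos: "0 < c \<bullet> l" "0 < c \<bullet> e" "0 \<le> c \<bullet> ek k" if "c \<in> Ce K e" for c
  proof -
    have c: "c \<in> dual_cone K" "c \<bullet> e = 1" using that unfolding Ce_def by auto
    hence "c \<noteq> 0" by auto
    have "ek k \<in> K" using ek_int interior_subset by blast
    thus "0 \<le> c \<bullet> ek k" using c unfolding dual_cone_def by blast
    from \<open>c \<noteq> 0\<close> show "0 < c \<bullet> l" "0 < c \<bullet> e"
      using dual_pos[OF c(1) _ l_int] c dual_pos[OF c(1) _ ek_int] by force+
  qed
  have bddI: "bdd_below ((\<lambda>c. \<gamma> * (c \<bullet> ek k) / (c \<bullet> l)) ` Ce K e)"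
  proof (rule bdd_belowI[of _ 0], clarify)
    fix c assume "c \<in> Ce K e"
    thus "0 \<le> \<gamma> * (c \<bullet> ek k) / (c \<bullet> l)"
      using Ce_pos[of c] gamma by (simp add: divide_nonneg_pos)
  qed
  have key: "armijo_ok K F (JF (x k)) (ek k) (x k) (d k) s" if s: "0 < s" "\<gamma> * s \<le> m0" for s
  proof (rule ccontr)
    assume na: "\<not> ?thesis"
    hence "ek k - s *\<^sub>R l \<notin> K" using armijo_suff[OF K smooth s(1)] by blast
    then obtain c where c: "c \<in> dual_cone K" "c \<bullet> (ek k - s *\<^sub>R l) < 0"
      using K_sep[OF K] by blast
    hence c0: "c \<noteq> 0" by auto
    have ce: "0 < c \<bullet> e" using dual_pos[OF c(1) c0 e_int] .
    define c' where "c' = (1 / (c \<bullet> e)) *\<^sub>R c"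
    have "c' \<in> dual_cone K" using c(1) ce unfolding c'_def dual_cone_def by auto
    hence c'C: "c' \<in> Ce K e" unfolding Ce_def c'_def using ce by simp
    have "c' \<bullet> ek k < s * (c' \<bullet> l)"
      using c(2) ce unfolding c'_def by (simp add: inner_diff_right field_simps)
    hence "\<gamma> * (c' \<bullet> ek k) / (c' \<bullet> l) < \<gamma> * s"
      using Ce_pos(1)[OF c'C] gamma by (simp add: field_simps)
    moreover have "m0 \<le> \<gamma> * (c' \<bullet> ek k) / (c' \<bullet> l)"
      unfolding m0_def using bddI c'C by (rule cINF_lower)
    ultimately show False using s by simp
  qed
  show "min m0 1 \<le> t k"
  proof (cases "armijo_ok K F (JF (x k)) (ek k) (x k) (d k) 1")
    case True
    hence "1 \<in> S" unfolding S_def by (metis (mono_tags, lifting) mem_Collect_eq power_0)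
    hence "1 \<le> Sup S" using bdd by (rule cSup_upper)
    thus ?thesis using tS by simp
  next
    case False
    hence m0g: "m0 < \<gamma>" using key[of 1] by force
    have "Ce K e \<noteq> {}"
    proof
      assume E: "Ce K e = {}"
      have "armijo_ok K F (JF (x k)) (ek k) (x k) (d k) 1"
      proof (rule ccontr)
        assume na: "\<not> ?thesis"
        hence "ek k - 1 *\<^sub>R l \<notin> K" using armijo_suff[OF K smooth, of 1] by force
        then obtain c where c: "c \<in> dual_cone K" "c \<bullet> (ek k - 1 *\<^sub>R l) < 0"
          using K_sep[OF K] by blast
        hence c0: "c \<noteq> 0" by auto
        have ce: "0 < c \<bullet> e" using dual_pos[OF c(1) c0 e_int] .
        have "(1 / (c \<bullet> e)) *\<^sub>R c \<in> dual_cone K" using c(1) ce unfolding dual_cone_def by auto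
        hence "(1 / (c \<bullet> e)) *\<^sub>R c \<in> Ce K e" unfolding Ce_def using ce by simp
        thus False using E by simp
      qed
      thus False using False by simp
    qed
    then obtain c0 where c0: "c0 \<in> Ce K e" by blast
    obtain r where r: "r > 0" "ek k - r *\<^sub>R l \<in> K" using int_shift[OF ek_int] by blast
    have "\<gamma> * r \<le> m0" unfolding m0_def
    proof (rule cINF_greatest)
      show "Ce K e \<noteq> {}" using c0 by blast
    next
      fix c assume cC: "c \<in> Ce K e"
      hence "0 \<le> c \<bullet> (ek k - r *\<^sub>R l)" using r unfolding Ce_def dual_cone_def by auto
      hence "r * (c \<bullet> l) \<le> c \<bullet> ek k" by (simp add: inner_diff_right)
      thus "\<gamma> * r \<le> \<gamma> * (c \<bullet> ek k) / (c \<bullet> l)"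
        using Ce_pos(1)[OF cC] gamma by (simp add: field_simps)
    qed
    hence m0p: "0 < m0" using r gamma by (smt (verit) mult_pos_pos)
    obtain n where n: "\<gamma> ^ n < m0" using real_arch_pow_inv[OF m0p gamma(2)] by blast
    define j where "j = (LEAST j. \<gamma> ^ Suc j \<le> m0)"
    have "\<gamma> * \<gamma> ^ n \<le> \<gamma> ^ n"
      using gamma by (intro mult_left_le_one_le) auto
    hence "\<gamma> ^ Suc n \<le> m0" using n by simp
    hence jP: "\<gamma> ^ Suc j \<le> m0" unfolding j_def by (rule LeastI)
    have jge: "m0 \<le> \<gamma> ^ j"
    proof (cases j)
      case 0 thus ?thesis using m0g gamma by simp
    next
      case (Suc i)
      have "\<not> \<gamma> ^ Suc i \<le> m0" using not_less_Least[of i "\<lambda>j. \<gamma> ^ Suc j \<le> m0"] Suc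
        unfolding j_def by simp
      thus ?thesis using Suc by simp
    qed
    have "armijo_ok K F (JF (x k)) (ek k) (x k) (d k) (\<gamma> ^ j)"
      using key[of "\<gamma> ^ j"] jP gamma by simp
    hence "\<gamma> ^ j \<in> S" unfolding S_def by blast
    hence "\<gamma> ^ j \<le> Sup S" using bdd by (rule cSup_upper)
    thus ?thesis using jge tS by simp
  qed
qed

end
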